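(* Let $J\subseteq\mathbb R$ be an open interval and $A:J\to\mathbb R$ of class $C^1$. For every three-tuple $\mathbf z=(z_1,z_2,z_3)$ of distinct points on $\Gamma=\{x+iA(x):x\in J\}$, with $z_j=x_j+iA(x_j)$, one has $$\mathtt S[\mathrm{Re}K_\Gamma](\mathbf z)=2\sum_{\substack{j=1\\k<l}}^3\frac{1}{s^2(x_j)\ell_k^2\ell_l^2}\Bigl[A'(x_j)(x_j-x_k)-\bigl(A(x_j)-A(x_k)\bigr)\Bigr]\Bigl[A'(x_j)(x_j-x_l)-\bigl(A(x_j)-A(x_l)\bigr)\Bigr],$$ $$\mathtt S[\mathrm{Im}K_\Gamma](\mathbf z)=2\sum_{\substack{j=1\\k<l}}^3\frac{1}{s^2(x_j)\ell_k^2\ell_l^2}\Bigl[(x_k-x_j)+A'(x_j)\bigl(A(x_k)-A(x_j)\bigr)\Bigr]\Bigl[(x_l-x_j)+A'(x_j)\bigl(A(x_l)-A(x_j)\bigr)\Bigr].$$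
   Context: In the sums, for each $j\in\{1,2,3\}$ the indices $k<l$ are the two elements of $\{1,2,3\}\setminus\{j\}$. Notation: $s^2(x)=1+(A'(x))^2$, and $\ell_j^2=(x_l-x_k)^2+(A(x_l)-A(x_k))^2$ whenever $\{j,k,l\}=\{1,2,3\}$. The kernel (normalizing factor $1/(2\pi)$ omitted) is $K_\Gamma(w,z)=\dfrac{A'(x)-i}{s(x)\,[\,x-y+i(A(x)-A(y))\,]}$ for $w=x+iA(x)$, $z=y+iA(y)$, $x\neq y$, with real and imaginary parts $\mathrm{Re}K_\Gamma$, $\mathrm{Im}K_\Gamma$. For a real-valued $K$ and distinct $z_1,z_2,z_3$, $\mathtt S[K](\mathbf z)=\sum_{\sigma\in S_3}K(z_{\sigma(1)},z_{\sigma(2)})K(z_{\sigma(1)},z_{\sigma(3)})$. *)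

theory Defs
  imports "HOL-Analysis.Analysis"
begin

definition s2 :: "(real \<Rightarrow> real) \<Rightarrow> real \<Rightarrow> real" where
  "s2 A x = 1 + (deriv A x)\<^sup>2"

text \<open>The kernel K_Gamma(w,z) (normalizing 1/(2 pi) omitted), for w = x + i A(x),
  z = y + i A(y) on the graph Gamma; x = Re w, y = Re z.\<close>
definition KGamma :: "(real \<Rightarrow> real) \<Rightarrow> complex \<Rightarrow> complex \<Rightarrow> complex" where
  "KGamma A w z = (let x = Re w; y = Re z in
      (complex_of_real (deriv A x) - \<i>) /
      (complex_of_real (sqrt (s2 A x)) * (complex_of_real (x - y) + \<i> * complex_of_real (A x - A y))))"

definition Ssym :: "(complex \<Rightarrow> complex \<Rightarrow> real) \<Rightarrow> (nat \<Rightarrow> complex) \<Rightarrow> real" where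
  "Ssym K z = (\<Sum>\<sigma>\<in>{\<sigma>. \<sigma> permutes {1,2,3::nat}}. K (z (\<sigma> 1)) (z (\<sigma> 2)) * K (z (\<sigma> 1)) (z (\<sigma> 3)))"

text \<open>For j in {1,2,3}: k = oth1 j < l = oth2 j are the two other indices.\<close>
definition oth1 :: "nat \<Rightarrow> nat" where "oth1 j = (if j = 1 then 2 else 1)"
definition oth2 :: "nat \<Rightarrow> nat" where "oth2 j = (if j = 3 then 2 else 3)"

definition ell2 :: "(real \<Rightarrow> real) \<Rightarrow> (nat \<Rightarrow> real) \<Rightarrow> nat \<Rightarrow> real" where
  "ell2 A x j = (x (oth2 j) - x (oth1 j))\<^sup>2 + (A (x (oth2 j)) - A (x (oth1 j)))\<^sup>2"

end

theory Submission
  imports Defs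
begin


lemma gRe: "s \<noteq> 0 \<Longrightarrow> Re ((complex_of_real a - \<i>) / (complex_of_real s * (complex_of_real p + \<i> * complex_of_real q)))
   = (a*p - q) / (s * (p^2+q^2))"
proof (cases "p^2+q^2 = 0")
  case True then have "p = 0" "q = 0" by (auto simp: sum_power2_eq_zero_iff)
  then show ?thesis by simp
next
  case False assume s: "s \<noteq> 0"
  have d: "s * s * (p*p+q*q) \<noteq> 0" "s * (p*p+q*q) \<noteq> 0" using False s by (simp_all add: power2_eq_square)
  show ?thesis apply (simp add: Re_divide cmod_def power2_eq_square)
    apply (subst frac_eq_eq) using d apply (simp_all add: algebra_simps) done
qed
lemma gIm: "s \<noteq> 0 \<Longrightarrow> Im ((complex_of_real a - \<i>) / (complex_of_real s * (complex_of_real p + \<i> * complex_of_real q)))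
   = (-p - a*q) / (s * (p^2+q^2))"
proof (cases "p^2+q^2 = 0")
  case True then have "p = 0" "q = 0" by (auto simp: sum_power2_eq_zero_iff)
  then show ?thesis by simp
next
  case False assume s: "s \<noteq> 0"
  have d: "s * s * (p*p+q*q) \<noteq> 0" "s * (p*p+q*q) \<noteq> 0" using False s by (simp_all add: power2_eq_square)
  show ?thesis apply (simp add: Im_divide cmod_def power2_eq_square)
    apply (subst frac_eq_eq) using d apply (simp_all add: algebra_simps) done
qed

lemma perm3: "(\<Sum>\<sigma>\<in>{\<sigma>. \<sigma> permutes {1,2,3::nat}}. g (\<sigma> 1) (\<sigma> 2) (\<sigma> 3)) =
  g 1 2 3 + g 1 3 2 + g 2 1 3 + g 2 3 1 + g 3 1 2 + (g 3 2 1 :: real)"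
  by (simp add: sum_over_permutations_insert permutes_empty transpose_def)

lemma prodq: "S > 0 \<Longrightarrow> X1 / (sqrt S * D1) * (X2 / (sqrt S * D2)) = 1 / (S * D2 * D1) * X1 * X2"
proof -
  assume "S > 0" then have "sqrt S * sqrt S = S" by simp
  then show ?thesis by (simp add: field_simps)
qed

lemma s2pos: "s2 A a > 0" unfolding s2_def by (simp add: add_pos_nonneg)

lemma KRe: "Re (KGamma A (Complex a (A a)) (Complex b (A b))) =
   (deriv A a * (a-b) - (A a - A b)) / (sqrt (s2 A a) * ((a-b)^2 + (A a - A b)^2))"
  unfolding KGamma_def Let_def complex.sel using s2pos[of A a] by (intro gRe) simp
lemma KIm: "Im (KGamma A (Complex a (A a)) (Complex b (A b))) =
   ((b - a) + deriv A a * (A b - A a)) / (sqrt (s2 A a) * ((a-b)^2 + (A a - A b)^2))"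
  unfolding KGamma_def Let_def complex.sel using s2pos[of A a] by (subst gIm) (auto simp: algebra_simps)

lemma Ssym3: "Ssym K z = K (z 1) (z 2) * K (z 1) (z 3) + K (z 1) (z 3) * K (z 1) (z 2)
  + K (z 2) (z 1) * K (z 2) (z 3) + K (z 2) (z 3) * K (z 2) (z 1)
  + K (z 3) (z 1) * K (z 3) (z 2) + K (z 3) (z 2) * K (z 3) (z 1)"
  unfolding Ssym_def using perm3[of "\<lambda>a b c. K (z a) (z b) * K (z a) (z c)"] by simp

lemma three2: "a + a + b + b + c + c = 2 * (a + b + (c::real))" by simp

lemma sqc: "((u::real) - v)^2 = (v - u)^2" by (simp add: power2_commute)

theorem lemma2p1:
  fixes J :: "real set" and A :: "real \<Rightarrow> real" and x :: "nat \<Rightarrow> real"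
  assumes "open J" and "is_interval J" and "J \<noteq> {}"
    and "\<forall>t\<in>J. A differentiable (at t)" and "continuous_on J (deriv A)"
    and "\<forall>j\<in>{1,2,3}. x j \<in> J"
    and "x 1 \<noteq> x 2" and "x 1 \<noteq> x 3" and "x 2 \<noteq> x 3"
  defines "z \<equiv> \<lambda>j. Complex (x j) (A (x j))"
  shows "(Ssym (\<lambda>w v. Re (KGamma A w v)) z =
           2 * (\<Sum>j\<in>{1,2,3}. (let k = oth1 j; l = oth2 j in
              1 / (s2 A (x j) * ell2 A x k * ell2 A x l) *
              (deriv A (x j) * (x j - x k) - (A (x j) - A (x k))) *
              (deriv A (x j) * (x j - x l) - (A (x j) - A (x l)))))) \<and>
         (Ssym (\<lambda>w v. Im (KGamma A w v)) z =
           2 * (\<Sum>j\<in>{1,2,3}. (let k = oth1 j; l = oth2 j in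
              1 / (s2 A (x j) * ell2 A x k * ell2 A x l) *
              ((x k - x j) + deriv A (x j) * (A (x k) - A (x j))) *
              ((x l - x j) + deriv A (x j) * (A (x l) - A (x j))))))"
proof -
  have S: "s2 A (x j) > 0" for j by (rule s2pos)
  define D where "D = (\<lambda>i j. (x i - x j)^2 + (A (x i) - A (x j))^2)"
  have Dp: "(x i - x j)^2 + (A (x i) - A (x j))^2 = D i j" for i j unfolding D_def by simp
  have Dsym: "D 2 1 = D 1 2" "D 3 1 = D 1 3" "D 3 2 = D 2 3" unfolding D_def by (simp_all add: power2_commute)
  have E: "ell2 A x 1 = D 2 3" "ell2 A x 2 = D 1 3" "ell2 A x 3 = D 1 2"
    unfolding D_def ell2_def oth1_def oth2_def by (simp_all add: power2_commute)
  have sum3: "(\<Sum>j\<in>{1,2,3::nat}. f j) = f 1 + f 2 + f 3" for f :: "nat \<Rightarrow> real" by simp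
  have o: "oth1 1 = 2" "oth2 1 = 3" "oth1 2 = 1" "oth2 2 = 3" "oth1 3 = 1" "oth2 3 = 2"
    by (simp_all add: oth1_def oth2_def)
  have re: "Ssym (\<lambda>w v. Re (KGamma A w v)) z = 2 * (\<Sum>j\<in>{1,2,3}. (let k = oth1 j; l = oth2 j in
              1 / (s2 A (x j) * ell2 A x k * ell2 A x l) *
              (deriv A (x j) * (x j - x k) - (A (x j) - A (x k))) *
              (deriv A (x j) * (x j - x l) - (A (x j) - A (x l)))))"
    unfolding Ssym3 z_def KRe sum3 Let_def o E
    apply (simp only: Dp prodq[OF S])
    apply (simp only: Dsym)
    apply (simp only: mult.commute mult.left_commute mult.assoc)
    by (rule three2)
  have im: "Ssym (\<lambda>w v. Im (KGamma A w v)) z = 2 * (\<Sum>j\<in>{1,2,3}. (let k = oth1 j; l = oth2 j in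
              1 / (s2 A (x j) * ell2 A x k * ell2 A x l) *
              ((x k - x j) + deriv A (x j) * (A (x k) - A (x j))) *
              ((x l - x j) + deriv A (x j) * (A (x l) - A (x j)))))"
    unfolding Ssym3 z_def KIm sum3 Let_def o E
    apply (simp only: Dp prodq[OF S])
    apply (simp only: Dsym)
    apply (simp only: mult.commute mult.left_commute mult.assoc)
    by (rule three2)
  show ?thesis using re im by blast
qed

end
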